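(* Let $G$ be a finite primitive monolithic soluble group, let $N=\operatorname{soc}(G)$ and let $H$ be a core-free maximal subgroup of $G$. Given $1\neq h\in H$ and $n\in N$, we have $hn\in V(G)$ if and only if $h\in V(H)$.
   Context: For a finite group $X$, $V(X)$ is the set of elements $x\in X$ such that $X=\langle x,y\rangle$ for some $y\in X$. A primitive monolithic group is one having a core-free maximal subgroup and a unique minimal normal subgroup. *)

theory Defs
  imports "HOL-Algebra.Algebra"
begin

definition gen_elems :: "('a, 'b) monoid_scheme \<Rightarrow> 'a set" where
  "gen_elems K = {a \<in> carrier K. \<exists>b \<in> carrier K. generate K {a, b} = carrier K}"

definition maximal_subgroup :: "'a set \<Rightarrow> ('a, 'b) monoid_scheme \<Rightarrow> bool" where
  "maximal_subgroup M G \<longleftrightarrow> subgroup M G \<and> M \<noteq> carrier G \<and>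
     (\<forall>K. subgroup K G \<and> M \<subseteq> K \<longrightarrow> K = M \<or> K = carrier G)"

definition core :: "'a set \<Rightarrow> ('a, 'b) monoid_scheme \<Rightarrow> 'a set" where
  "core M G = (\<Inter>g \<in> carrier G. (g <#\<^bsub>G\<^esub> M) #>\<^bsub>G\<^esub> (inv\<^bsub>G\<^esub> g))"

definition core_free :: "'a set \<Rightarrow> ('a, 'b) monoid_scheme \<Rightarrow> bool" where
  "core_free M G \<longleftrightarrow> core M G = {\<one>\<^bsub>G\<^esub>}"

definition minimal_normal :: "'a set \<Rightarrow> ('a, 'b) monoid_scheme \<Rightarrow> bool" where
  "minimal_normal N G \<longleftrightarrow> N \<lhd> G \<and> N \<noteq> {\<one>\<^bsub>G\<^esub>} \<and>
     (\<forall>K. K \<lhd> G \<and> K \<subseteq> N \<longrightarrow> K = {\<one>\<^bsub>G\<^esub>} \<or> K = N)"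

definition socle :: "('a, 'b) monoid_scheme \<Rightarrow> 'a set" where
  "socle G = generate G (\<Union>{N. minimal_normal N G})"

definition primitive_monolithic :: "('a, 'b) monoid_scheme \<Rightarrow> bool" where
  "primitive_monolithic G \<longleftrightarrow> (\<exists>M. maximal_subgroup M G \<and> core_free M G) \<and>
     (\<exists>!N. minimal_normal N G)"

end

theory Submission
  imports Defs
begin

lemma (in group) cauchy_weak:
  assumes fin: "finite (carrier G)" and r: "Factorial_Ring.prime r" "r dvd order G"
  shows "\<exists>x\<in>carrier G. x \<noteq> \<one> \<and> x [^] r = \<one>"
proof -
  define a where "a = multiplicity r (order G)"
  have o0: "order G \<noteq> 0" using fin by (simp add: order_gt_0_iff_finite[symmetric])
  have "r ^ a dvd order G" unfolding a_def by (rule multiplicity_dvd)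
  then obtain m where om: "order G = r ^ a * m" by blast
  have r2: "r \<ge> 2" using prime_ge_2_nat[OF r(1)] .
  have a1: "a \<ge> 1" unfolding a_def
  proof (rule multiplicity_geI)
    show "order G \<noteq> 0" by (rule o0)
    show "\<not> is_unit r" using r2 by simp
    show "r ^ 1 dvd order G" using r(2) by simp
  qed
  obtain P where P: "subgroup P G" "card P = r ^ a"
    using sylow_thm[OF r(1) is_group om fin] by blast
  have "r ^ 1 \<le> r ^ a" using a1 r2 by (intro power_increasing) auto
  then have "card P \<ge> 2" using P(2) r2 by simp
  have "\<not> P \<subseteq> {\<one>}"
  proof
    assume "P \<subseteq> {\<one>}"
    then have "card P \<le> card {\<one>}" by (intro card_mono) auto
    then show False using \<open>card P \<ge> 2\<close> by simp
  qed
  then obtain x where x: "x \<in> P" "x \<noteq> \<one>" by blast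
  have xc: "x \<in> carrier G" using subgroup.mem_carrier[OF P(1) x(1)] .
  interpret PG: group "G\<lparr>carrier := P\<rparr>" using subgroup_imp_group[OF P(1)] .
  have "x [^]\<^bsub>G\<lparr>carrier := P\<rparr>\<^esub> order (G\<lparr>carrier := P\<rparr>) = \<one>\<^bsub>G\<lparr>carrier := P\<rparr>\<^esub>"
    using PG.pow_order_eq_1[of x] x(1) by simp
  then have "x [^] (r ^ a) = \<one>" using P(2) nat_pow_consistent[of x "r ^ a" P] by (simp add: order_def)
  then have "ord x dvd r ^ a" using pow_eq_id[OF xc] by simp
  then obtain j where j: "j \<le> a" "ord x = r ^ j" using divides_primepow_nat[OF r(1)] by blast
  have "j \<noteq> 0" using j ord_eq_1[OF xc] x(2) by auto
  then obtain i where i: "j = Suc i" using not0_implies_Suc by blast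
  define y where "y = x [^] (r ^ i)"
  have yc: "y \<in> carrier G" unfolding y_def using xc by simp
  have "\<not> r ^ Suc i dvd r ^ i" using r2
    by (intro nat_dvd_not_less) auto
  then have "y \<noteq> \<one>" unfolding y_def using pow_eq_id[OF xc, of "r ^ i"] j i by simp
  moreover have "y [^] r = \<one>" unfolding y_def using xc j i
    by (simp add: nat_pow_pow mult.commute) (metis pow_ord_eq_1)
  ultimately show ?thesis using yc by blast
qed

lemma fixpoint_mod:
  fixes P :: "('g,'c) monoid_scheme" and act :: "'e \<Rightarrow> 'g \<Rightarrow> 'e"
  assumes grp: "group P" and finP: "finite (carrier P)" and q: "Factorial_Ring.prime q"
    and cardP: "card (carrier P) = q ^ b" and finE: "finite E"
    and cl: "\<And>e x. e \<in> E \<Longrightarrow> x \<in> carrier P \<Longrightarrow> act e x \<in> E"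
    and one: "\<And>e. e \<in> E \<Longrightarrow> act e \<one>\<^bsub>P\<^esub> = e"
    and mult: "\<And>e x y. e \<in> E \<Longrightarrow> x \<in> carrier P \<Longrightarrow> y \<in> carrier P \<Longrightarrow>
                 act (act e x) y = act e (x \<otimes>\<^bsub>P\<^esub> y)"
  shows "card E mod q = card {e \<in> E. \<forall>x \<in> carrier P. act e x = e} mod q"
proof -
  interpret P: group P by (rule grp)
  define \<phi> where "\<phi> = (\<lambda>x. \<lambda>e\<in>E. act e (inv\<^bsub>P\<^esub> x))"
  have canc: "\<phi> (inv\<^bsub>P\<^esub> x) (\<phi> x e) = e" if x: "x \<in> carrier P" and e: "e \<in> E" for x e
  proof -
    have "\<phi> (inv\<^bsub>P\<^esub> x) (\<phi> x e) = act (act e (inv\<^bsub>P\<^esub> x)) x"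
      using x e cl by (simp add: \<phi>_def)
    also have "\<dots> = act e (inv\<^bsub>P\<^esub> x \<otimes>\<^bsub>P\<^esub> x)" using x e by (simp add: mult)
    also have "\<dots> = e" using x e by (simp add: one)
    finally show ?thesis .
  qed
  have bij: "\<phi> x \<in> Bij E" if x: "x \<in> carrier P" for x
  proof -
    have "bij_betw (\<phi> x) E E"
    proof (rule bij_betwI[where g = "\<phi> (inv\<^bsub>P\<^esub> x)"])
      show "\<phi> x \<in> E \<rightarrow> E" using x cl by (auto simp: \<phi>_def)
      show "\<phi> (inv\<^bsub>P\<^esub> x) \<in> E \<rightarrow> E" using x cl by (auto simp: \<phi>_def)
      show "\<phi> (inv\<^bsub>P\<^esub> x) (\<phi> x e) = e" if "e \<in> E" for e using canc x that by simp
      show "\<phi> x (\<phi> (inv\<^bsub>P\<^esub> x) e) = e" if "e \<in> E" for e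
        using canc[of "inv\<^bsub>P\<^esub> x" e] x that by simp
    qed
    moreover have "\<phi> x \<in> extensional E" by (simp add: \<phi>_def)
    ultimately show ?thesis by (simp add: Bij_def)
  qed
  have hom: "\<phi> \<in> hom P (BijGroup E)"
  proof (rule homI)
    show "\<phi> x \<in> carrier (BijGroup E)" if "x \<in> carrier P" for x
      using bij[OF that] by (simp add: BijGroup_def)
    show "\<phi> (x \<otimes>\<^bsub>P\<^esub> y) = \<phi> x \<otimes>\<^bsub>BijGroup E\<^esub> \<phi> y"
      if x: "x \<in> carrier P" and y: "y \<in> carrier P" for x y
    proof -
      have "\<phi> x \<otimes>\<^bsub>BijGroup E\<^esub> \<phi> y = compose E (\<phi> x) (\<phi> y)"
        using bij x y by (simp add: BijGroup_def)
      also have "\<dots> = \<phi> (x \<otimes>\<^bsub>P\<^esub> y)"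
      proof (rule ext)
        fix e show "compose E (\<phi> x) (\<phi> y) e = \<phi> (x \<otimes>\<^bsub>P\<^esub> y) e"
        proof (cases "e \<in> E")
          case True
          then show ?thesis using x y cl
            by (simp add: compose_def \<phi>_def mult P.inv_mult_group)
        next
          case False
          then show ?thesis by (simp add: compose_def \<phi>_def)
        qed
      qed
      finally show ?thesis by simp
    qed
  qed
  interpret A: group_action P E \<phi>
    unfolding group_action_def group_hom_def group_hom_axioms_def
    using grp group_BijGroup hom by blast
  define Fix where "Fix = {e \<in> E. \<forall>x \<in> carrier P. act e x = e}"
  have orb_eq: "orbit P \<phi> e = {act e x | x. x \<in> carrier P}" if "e \<in> E" for e
  proof -
    have "orbit P \<phi> e = {act e (inv\<^bsub>P\<^esub> x) | x. x \<in> carrier P}"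
      using that by (simp add: orbit_def \<phi>_def)
    also have "\<dots> = {act e x | x. x \<in> carrier P}"
      by (metis (no_types, opaque_lifting) P.inv_closed P.inv_inv)
    finally show ?thesis .
  qed
  have orbE: "orbit P \<phi> e \<subseteq> E" if "e \<in> E" for e
    using orb_eq[OF that] cl that by auto
  have finorb: "finite (orbit P \<phi> e)" if "e \<in> E" for e
    using orbE[OF that] finE finite_subset by blast
  have fixorb: "x \<in> Fix" if "e \<in> Fix" "x \<in> orbit P \<phi> e" for e x
    using that orb_eq by (auto simp: Fix_def)
  have nfixorb: "x \<notin> Fix" if "e \<in> E" "e \<notin> Fix" "x \<in> orbit P \<phi> e" for e x
  proof
    assume xF: "x \<in> Fix"
    from that orb_eq obtain g where g: "g \<in> carrier P" "x = act e g" by auto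
    have "act x (inv\<^bsub>P\<^esub> g) = act e (g \<otimes>\<^bsub>P\<^esub> inv\<^bsub>P\<^esub> g)" using g that by (simp add: mult)
    also have "\<dots> = e" using g that by (simp add: one)
    finally have "e = x" using xF g by (simp add: Fix_def)
    then show False using xF that by simp
  qed
  have qdvd: "q dvd card (orbit P \<phi> e)" if e: "e \<in> E" "e \<notin> Fix" for e
  proof -
    have "card (orbit P \<phi> e) * card (stabilizer P \<phi> e) = q ^ b"
      using A.orbit_stabilizer_theorem[OF e(1)] cardP by (simp add: order_def)
    then have "card (orbit P \<phi> e) dvd q ^ b" by (metis dvd_triv_left)
    then obtain i where i: "card (orbit P \<phi> e) = q ^ i"
      using divides_primepow_nat[OF q] by blast
    obtain x where x: "x \<in> carrier P" "act e x \<noteq> e" using e by (auto simp: Fix_def)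
    have "e \<in> orbit P \<phi> e" using orb_eq[OF e(1)] one[OF e(1)] P.one_closed by (metis (mono_tags, lifting) mem_Collect_eq)
    moreover have "act e x \<in> orbit P \<phi> e" using orb_eq[OF e(1)] x by auto
    ultimately have "{e, act e x} \<subseteq> orbit P \<phi> e" by blast
    then have "card {e, act e x} \<le> card (orbit P \<phi> e)" using finorb[OF e(1)] card_mono by blast
    then have "card (orbit P \<phi> e) \<ge> 2" using x by simp
    then have "i \<noteq> 0" using i by (metis power_0 numeral_le_one_iff semiring_norm(69))
    then show ?thesis using i by simp
  qed
  define f where "f = (\<lambda>x. if x \<in> Fix then (0::nat) else 1)"
  have "(\<Sum>orb\<in>orbits P E \<phi>. \<Sum>x\<in>orb. f x) = (\<Sum>x\<in>E. f x)"
    using A.disjoint_sum[OF finE] by blast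
  moreover have "q dvd (\<Sum>x\<in>orb. f x)" if orbin: "orb \<in> orbits P E \<phi>" for orb
  proof -
    obtain e where e: "e \<in> E" "orb = orbit P \<phi> e" using orbin unfolding orbits_def by blast
    show ?thesis
    proof (cases "e \<in> Fix")
      case True
      then have "(\<Sum>x\<in>orb. f x) = 0" using fixorb e by (simp add: f_def)
      then show ?thesis by simp
    next
      case False
      then have "(\<Sum>x\<in>orb. f x) = card orb" using nfixorb e by (simp add: f_def)
      then show ?thesis using qdvd e False by simp
    qed
  qed
  ultimately have "q dvd (\<Sum>x\<in>E. f x)" by (metis dvd_sum)
  moreover have "(\<Sum>x\<in>E. f x) = card (E - Fix)"
    using finE by (simp add: f_def sum.If_cases Diff_eq)
  ultimately have d: "q dvd card (E - Fix)" by simp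
  have "Fix \<subseteq> E" by (auto simp: Fix_def)
  then have "card E = card Fix + card (E - Fix)"
    using finE by (metis card_Diff_subset card_mono le_add_diff_inverse finite_subset)
  then show ?thesis using d unfolding Fix_def[symmetric] by (simp add: mod_add_right_eq[symmetric])
qed

lemma (in group) inv_cancel_left1 [simp]:
  "g \<in> carrier G \<Longrightarrow> z \<in> carrier G \<Longrightarrow> inv g \<otimes> (g \<otimes> z) = z"
  by (simp add: m_assoc[symmetric])

lemma (in group) inv_cancel_left2 [simp]:
  "g \<in> carrier G \<Longrightarrow> z \<in> carrier G \<Longrightarrow> g \<otimes> (inv g \<otimes> z) = z"
  by (simp add: m_assoc[symmetric])

lemma (in group) conj_pow:
  assumes "g \<in> carrier G" "x \<in> carrier G"
  shows "(g \<otimes> x \<otimes> inv g) [^] (n::nat) = g \<otimes> x [^] n \<otimes> inv g"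
proof (induction n)
  case 0 then show ?case using assms by simp
next
  case (Suc n)
  have "(g \<otimes> x \<otimes> inv g) [^] Suc n = (g \<otimes> x [^] n \<otimes> inv g) \<otimes> (g \<otimes> x \<otimes> inv g)"
    using Suc by simp
  also have "\<dots> = g \<otimes> (x [^] n \<otimes> (inv g \<otimes> g) \<otimes> x) \<otimes> inv g"
    using assms by (simp add: m_assoc)
  also have "\<dots> = g \<otimes> x [^] Suc n \<otimes> inv g" using assms by simp
  finally show ?case .
qed

lemma (in group) minnormal_abelian:
  assumes solv: "solvable G" and M: "M \<lhd> G"
    and min: "\<forall>K. K \<lhd> G \<and> K \<subseteq> M \<longrightarrow> K = {\<one>} \<or> K = M" and ne: "M \<noteq> {\<one>}"
    and x: "x \<in> M" and y: "y \<in> M"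
  shows "x \<otimes> y = y \<otimes> x"
proof -
  have Ms: "subgroup M G" using M by (rule normal_imp_subgroup)
  have Mc: "M \<subseteq> carrier G" using subgroup.subset[OF Ms] .
  have Dn: "derived G M \<lhd> G" using derived_is_normal[OF M] .
  have Ds: "derived G M \<subseteq> M" using derived_incl[OF subset_refl Ms] .
  have D1: "derived G M = {\<one>}"
  proof (rule ccontr)
    assume "derived G M \<noteq> {\<one>}"
    then have DM: "derived G M = M" using min Dn Ds by blast
    have it: "(derived G ^^ n) M = M" for n
      by (induction n) (simp_all add: DM)
    obtain n where n: "(derived G ^^ n) (carrier G) = {\<one>}"
      using solv solvable_iff_trivial_derived_seq by blast
    have "(derived G ^^ n) M \<subseteq> (derived G ^^ n) (carrier G)"
      using mono_exp_of_derived[OF Mc] .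
    then have "M \<subseteq> {\<one>}" using it n by simp
    then show False using ne subgroup.one_closed[OF Ms] by blast
  qed
  have xc: "x \<in> carrier G" and yc: "y \<in> carrier G" using x y Mc by auto
  have "x \<otimes> y \<otimes> inv x \<otimes> inv y \<in> derived_set G M" using x y by blast
  then have "x \<otimes> y \<otimes> inv x \<otimes> inv y \<in> derived G M"
    unfolding derived_def by (rule generate.incl)
  then have c: "x \<otimes> y \<otimes> inv x \<otimes> inv y = \<one>" using D1 by simp
  have "x \<otimes> y = (x \<otimes> y \<otimes> inv x \<otimes> inv y) \<otimes> (y \<otimes> x)"
    using xc yc by (simp add: m_assoc)
  then show ?thesis using c xc yc by simp
qed

lemma (in group) minnormal_pgroup:
  assumes fin: "finite (carrier G)" and solv: "solvable G" and M: "M \<lhd> G"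
    and min: "\<forall>K. K \<lhd> G \<and> K \<subseteq> M \<longrightarrow> K = {\<one>} \<or> K = M" and ne: "M \<noteq> {\<one>}"
  shows "\<exists>q k. Factorial_Ring.prime q \<and> k \<ge> 1 \<and> card M = q ^ k"
proof -
  have Ms: "subgroup M G" using M by (rule normal_imp_subgroup)
  have Mc: "M \<subseteq> carrier G" using subgroup.subset[OF Ms] .
  have finM: "finite M" using fin Mc finite_subset by blast
  have comm: "x \<otimes> y = y \<otimes> x" if "x \<in> M" "y \<in> M" for x y
    using minnormal_abelian[OF solv M min ne that] .
  interpret MG: group "G\<lparr>carrier := M\<rparr>" using subgroup_imp_group[OF Ms] .
  have oM: "order (G\<lparr>carrier := M\<rparr>) = card M" by (simp add: order_def)
  have cauchyM: "\<exists>x\<in>M. x \<noteq> \<one> \<and> x [^] r = \<one>" if r: "Factorial_Ring.prime r" "r dvd card M" for r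
  proof -
    obtain x where "x \<in> carrier (G\<lparr>carrier := M\<rparr>)" "x \<noteq> \<one>\<^bsub>G\<lparr>carrier := M\<rparr>\<^esub>"
        "x [^]\<^bsub>G\<lparr>carrier := M\<rparr>\<^esub> r = \<one>\<^bsub>G\<lparr>carrier := M\<rparr>\<^esub>"
      using MG.cauchy_weak[of r] finM r oM by auto
    then show ?thesis using nat_pow_consistent[of x r M] by auto
  qed
  have "card M \<noteq> 1"
  proof
    assume "card M = 1"
    then obtain z where "M = {z}" using card_1_singletonE by blast
    then show False using ne subgroup.one_closed[OF Ms] by simp
  qed
  then obtain q where q: "Factorial_Ring.prime q" "q dvd card M" using prime_factor_nat by blast
  define Mq where "Mq = {x \<in> M. x [^] q = \<one>}"
  have Mqs: "subgroup Mq G"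
  proof (rule subgroupI)
    show "Mq \<subseteq> carrier G" using Mc by (auto simp: Mq_def)
    show "Mq \<noteq> {}" using subgroup.one_closed[OF Ms] by (auto simp: Mq_def)
    show "inv a \<in> Mq" if "a \<in> Mq" for a
      using that Mc subgroup.m_inv_closed[OF Ms] by (auto simp: Mq_def nat_pow_inv)
    show "a \<otimes> b \<in> Mq" if "a \<in> Mq" "b \<in> Mq" for a b
    proof -
      have ab: "a \<in> M" "b \<in> M" "a [^] q = \<one>" "b [^] q = \<one>" using that by (auto simp: Mq_def)
      have "(a \<otimes> b) [^] q = a [^] q \<otimes> b [^] q"
        using pow_mult_distrib[OF comm[OF ab(1,2)], of q] ab(1,2) Mc by blast
      then show ?thesis using ab subgroup.m_closed[OF Ms] Mc by (auto simp: Mq_def)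
    qed
  qed
  have Mqn: "Mq \<lhd> G"
  proof (rule normal_invI[OF Mqs])
    fix g h assume g: "g \<in> carrier G" and h: "h \<in> Mq"
    then have hM: "h \<in> M" and hq: "h [^] q = \<one>" by (auto simp: Mq_def)
    have hc: "h \<in> carrier G" using hM Mc by auto
    have "g \<otimes> h \<otimes> inv g \<in> M" using normal.inv_op_closed2[OF M g hM] .
    moreover have "(g \<otimes> h \<otimes> inv g) [^] q = \<one>" using conj_pow[OF g hc] hq g by simp
    ultimately show "g \<otimes> h \<otimes> inv g \<in> Mq" by (simp add: Mq_def)
  qed
  have "Mq \<noteq> {\<one>}"
  proof
    assume a: "Mq = {\<one>}"
    obtain x where "x \<in> M" "x \<noteq> \<one>" "x [^] q = \<one>" using cauchyM[OF q] by blast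
    then have "x \<in> Mq" by (simp add: Mq_def)
    then show False using a \<open>x \<noteq> \<one>\<close> by simp
  qed
  then have MqM: "Mq = M" using min Mqn by (auto simp: Mq_def)
  have onlyq: "r = q" if r: "Factorial_Ring.prime r" "r dvd card M" for r
  proof -
    obtain y where y: "y \<in> M" "y \<noteq> \<one>" "y [^] r = \<one>" using cauchyM[OF r] by blast
    have yc: "y \<in> carrier G" using y Mc by auto
    have "y [^] q = \<one>" using y MqM by (auto simp: Mq_def)
    then have d1: "ord y dvd q" using pow_eq_id[OF yc] by simp
    have d2: "ord y dvd r" using y(3) pow_eq_id[OF yc] by simp
    have n1: "ord y \<noteq> 1" using ord_eq_1[OF yc] y(2) by simp
    have "ord y = q" using d1 n1 q(1) unfolding prime_nat_iff by auto
    moreover have "ord y = r" using d2 n1 r(1) unfolding prime_nat_iff by auto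
    ultimately show ?thesis by simp
  qed
  have cM0: "card M \<noteq> 0" using finM subgroup.one_closed[OF Ms] by auto
  have qnu: "\<not> is_unit q" using q(1) not_prime_unit by blast
  obtain m where m: "card M = q ^ multiplicity q (card M) * m" "\<not> q dvd m"
    using multiplicity_decompose'[OF cM0 qnu] by blast
  have "m = 1"
  proof (rule ccontr)
    assume "m \<noteq> 1"
    then obtain r where r: "Factorial_Ring.prime r" "r dvd m" using prime_factor_nat by blast
    have "r dvd q ^ multiplicity q (card M) * m" using r(2) by (rule dvd_mult)
    then have "r dvd card M" using m(1) by simp
    then have "r = q" using onlyq r(1) by blast
    then show False using r m(2) by simp
  qed
  then have cq: "card M = q ^ multiplicity q (card M)" using m(1) by simp
  have "multiplicity q (card M) \<ge> 1"
  proof (rule ccontr)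
    assume "\<not> multiplicity q (card M) \<ge> 1"
    then have "multiplicity q (card M) = 0" by simp
    then have "card M = 1" using cq by simp
    then show False using \<open>card M \<noteq> 1\<close> by simp
  qed
  then show ?thesis using q(1) cq by blast
qed

context group begin

lemma mem_core: "x \<in> core H G \<longleftrightarrow> (\<forall>g\<in>carrier G. \<exists>a\<in>H. x = g \<otimes> a \<otimes> inv g)"
  unfolding core_def l_coset_def r_coset_def by auto

lemma normal_in_core:
  assumes K: "K \<lhd> G" and KH: "K \<subseteq> H" shows "K \<subseteq> core H G"
proof
  fix x assume x: "x \<in> K"
  have xc: "x \<in> carrier G" using subgroup.mem_carrier[OF normal_imp_subgroup[OF K] x] .
  show "x \<in> core H G" unfolding mem_core
  proof
    fix g assume g: "g \<in> carrier G"
    have "inv g \<otimes> x \<otimes> g \<in> K" using normal.inv_op_closed1[OF K g x] .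
    moreover have "g \<otimes> (inv g \<otimes> x \<otimes> g) \<otimes> inv g = x" using g xc by (simp add: m_assoc)
    ultimately show "\<exists>a\<in>H. x = g \<otimes> a \<otimes> inv g" using KH by force
  qed
qed

lemma set_mult_mem: "x \<in> A <#> B \<longleftrightarrow> (\<exists>a\<in>A. \<exists>b\<in>B. x = a \<otimes> b)"
  by (auto simp: set_mult_def)

lemma prod_subgroup:
  assumes N: "N \<lhd> G" and S: "subgroup S G" shows "subgroup (S <#> N) G"
proof -
  have "S <#> N = N <#> S" using commut_normal[OF S N] .
  moreover have "subgroup (N <#> S) G"
    using second_isomorphism_grp.normal_set_mult_subgroup[of N G S] N S
    unfolding second_isomorphism_grp_def second_isomorphism_grp_axioms_def by blast
  ultimately show ?thesis by simp
qed

lemma norm_by_parts: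
  assumes S: "subgroup S G" and A: "A \<subseteq> carrier G" and B: "B \<subseteq> carrier G"
    and dec: "\<And>g. g \<in> carrier G \<Longrightarrow> \<exists>a\<in>A. \<exists>b\<in>B. g = a \<otimes> b"
    and iA: "\<And>a s. a \<in> A \<Longrightarrow> s \<in> S \<Longrightarrow> a \<otimes> s \<otimes> inv a \<in> S"
    and iB: "\<And>b s. b \<in> B \<Longrightarrow> s \<in> S \<Longrightarrow> b \<otimes> s \<otimes> inv b \<in> S"
  shows "S \<lhd> G"
proof (rule normal_invI[OF S])
  fix g s assume g: "g \<in> carrier G" and s: "s \<in> S"
  obtain a b where ab: "a \<in> A" "b \<in> B" "g = a \<otimes> b" using dec[OF g] by blast
  have ac: "a \<in> carrier G" and bc: "b \<in> carrier G" using ab A B by auto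
  have sc: "s \<in> carrier G" using s subgroup.subset[OF S] by blast
  have "g \<otimes> s \<otimes> inv g = a \<otimes> (b \<otimes> s \<otimes> inv b) \<otimes> inv a"
    using ab(3) ac bc sc by (simp add: m_assoc inv_mult_group)
  moreover have "b \<otimes> s \<otimes> inv b \<in> S" using iB[OF ab(2) s] .
  ultimately show "g \<otimes> s \<otimes> inv g \<in> S" using iA[OF ab(1)] by simp
qed

lemma card_prod:
  assumes A: "subgroup A G" and B: "subgroup B G" and AB: "A \<inter> B \<subseteq> {\<one>}"
  shows "card (A <#> B) = card A * card B"
proof -
  have Ac: "A \<subseteq> carrier G" and Bc: "B \<subseteq> carrier G" using A B subgroup.subset by auto
  have "A <#> B = (\<lambda>(a,b). a \<otimes> b) ` (A \<times> B)" by (auto simp: set_mult_def)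
  moreover have "inj_on (\<lambda>(a,b). a \<otimes> b) (A \<times> B)"
  proof (rule inj_onI, clarify)
    fix a b a' b' assume a: "a \<in> A" "a' \<in> A" and b: "b \<in> B" "b' \<in> B"
      and eq: "a \<otimes> b = a' \<otimes> b'"
    have c: "a \<in> carrier G" "a' \<in> carrier G" "b \<in> carrier G" "b' \<in> carrier G" using a b Ac Bc by auto
    have "inv a' \<otimes> a = b' \<otimes> inv b"
    proof -
      have "inv a' \<otimes> (a \<otimes> b) \<otimes> inv b = inv a' \<otimes> (a' \<otimes> b') \<otimes> inv b" using eq by simp
      then show ?thesis using c by (simp add: m_assoc)
    qed
    moreover have "inv a' \<otimes> a \<in> A" using a subgroup.m_closed[OF A] subgroup.m_inv_closed[OF A] by blast
    moreover have "b' \<otimes> inv b \<in> B" using b subgroup.m_closed[OF B] subgroup.m_inv_closed[OF B] by blast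
    ultimately have "inv a' \<otimes> a = \<one>" using AB by auto
    then have "a = a'" using c by (metis inv_closed inv_inv l_inv_ex inv_equality)
    then show "a = a' \<and> b = b'" using eq c by simp
  qed
  ultimately show ?thesis by (simp add: card_image card_cartesian_product)
qed

end

locale pm = group G for G (structure) +
  fixes N H
  assumes fin: "finite (carrier G)" and solv: "solvable G"
    and Nn: "N \<lhd> G" and Nne: "N \<noteq> {\<one>}"
    and Nmin: "\<And>K. K \<lhd> G \<Longrightarrow> K \<subseteq> N \<Longrightarrow> K = {\<one>} \<or> K = N"
    and Hs: "subgroup H G" and Hmax: "\<And>K. subgroup K G \<Longrightarrow> H \<subseteq> K \<Longrightarrow> K = H \<or> K = carrier G"
    and Hcf: "core H G = {\<one>}"
begin

lemma Ns: "subgroup N G" using normal_imp_subgroup[OF Nn] .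
lemma Nc: "N \<subseteq> carrier G" using subgroup.subset[OF Ns] .
lemma Hc: "H \<subseteq> carrier G" using subgroup.subset[OF Hs] .

lemma normal_in_H_triv:
  assumes "K \<lhd> G" "K \<subseteq> H" shows "K = {\<one>}"
proof -
  have "K \<subseteq> {\<one>}" using normal_in_core[OF assms] Hcf by simp
  moreover have "\<one> \<in> K" using subgroup.one_closed[OF normal_imp_subgroup[OF assms(1)]] .
  ultimately show ?thesis by blast
qed

lemma N_not_H: "\<not> N \<subseteq> H"
  using normal_in_H_triv[OF Nn] Nne by blast

lemma Nab: "x \<in> N \<Longrightarrow> y \<in> N \<Longrightarrow> x \<otimes> y = y \<otimes> x"
  using minnormal_abelian[OF solv Nn _ Nne] Nmin by blast

lemma HN: "H <#> N = carrier G"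
proof -
  have s: "subgroup (H <#> N) G" using prod_subgroup[OF Nn Hs] .
  have "H \<subseteq> H <#> N"
  proof
    fix x assume "x \<in> H"
    moreover have "x = x \<otimes> \<one>" using \<open>x \<in> H\<close> Hc by auto
    ultimately show "x \<in> H <#> N" unfolding set_mult_mem using subgroup.one_closed[OF Ns] by blast
  qed
  moreover have "H <#> N \<noteq> H"
  proof
    assume e: "H <#> N = H"
    have "N \<subseteq> H"
    proof
      fix x assume "x \<in> N"
      moreover have "x = \<one> \<otimes> x" using \<open>x \<in> N\<close> Nc by auto
      ultimately have "x \<in> H <#> N" unfolding set_mult_mem using subgroup.one_closed[OF Hs] by blast
      then show "x \<in> H" using e by simp
    qed
    then show False using N_not_H by simp
  qed
  ultimately show ?thesis using Hmax[OF s] by blast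
qed

lemma decomp: "g \<in> carrier G \<Longrightarrow> \<exists>a\<in>H. \<exists>v\<in>N. g = a \<otimes> v"
  using HN set_mult_mem by blast

lemma HN_triv: "x \<in> H \<Longrightarrow> x \<in> N \<Longrightarrow> x = \<one>"
proof -
  assume xH: "x \<in> H" and xN: "x \<in> N"
  have s: "subgroup (H \<inter> N) G" using subgroups_Inter_pair[OF Hs Ns] .
  have "H \<inter> N \<lhd> G"
  proof (rule norm_by_parts[OF s Hc Nc decomp])
    show "a \<otimes> s \<otimes> inv a \<in> H \<inter> N" if a: "a \<in> H" and s: "s \<in> H \<inter> N" for a s
    proof -
      have ac: "a \<in> carrier G" using a Hc by auto
      have "a \<otimes> s \<otimes> inv a \<in> N" using normal.inv_op_closed2[OF Nn ac] s by simp
      moreover have "a \<otimes> s \<otimes> inv a \<in> H"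
        using subgroup.m_closed[OF Hs] subgroup.m_inv_closed[OF Hs] a s by simp
      ultimately show ?thesis by simp
    qed
    show "b \<otimes> s \<otimes> inv b \<in> H \<inter> N" if b: "b \<in> N" and s: "s \<in> H \<inter> N" for b s
    proof -
      have "b \<otimes> s = s \<otimes> b" using Nab b s by blast
      moreover have "b \<in> carrier G" "s \<in> carrier G" using b s Nc by auto
      ultimately have "b \<otimes> s \<otimes> inv b = s" by (simp add: m_assoc)
      then show ?thesis using s by simp
    qed
  qed
  then have "H \<inter> N = {\<one>} \<or> H \<inter> N = N" using Nmin by blast
  moreover have "H \<inter> N \<noteq> N" using N_not_H by blast
  ultimately show "x = \<one>" using xH xN by blast
qed

end

context group begin

lemma subgroup_trans:
  assumes H: "subgroup H G" and L: "subgroup L (G\<lparr>carrier := H\<rparr>)"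
  shows "subgroup L G"
proof -
  have LH: "L \<subseteq> H" using subgroup.subset[OF L] by simp
  show ?thesis
  proof (rule subgroupI)
    show "L \<subseteq> carrier G" using LH subgroup.subset[OF H] by blast
    show "L \<noteq> {}" using subgroup.one_closed[OF L] by blast
    show "inv a \<in> L" if a: "a \<in> L" for a
    proof -
      have "inv\<^bsub>G\<lparr>carrier := H\<rparr>\<^esub> a \<in> L" using subgroup.m_inv_closed[OF L a] .
      moreover have "inv\<^bsub>G\<lparr>carrier := H\<rparr>\<^esub> a = inv a" using m_inv_consistent[OF H] a LH by blast
      ultimately show ?thesis by simp
    qed
    show "a \<otimes> b \<in> L" if "a \<in> L" "b \<in> L" for a b
      using subgroup.m_closed[OF L that] by simp
  qed
qed

lemma comm_conj_iff:
  assumes x: "x \<in> carrier G" and v: "v \<in> carrier G"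
  shows "inv x \<otimes> v \<otimes> x = v \<longleftrightarrow> x \<otimes> v = v \<otimes> x"
proof
  assume e: "inv x \<otimes> v \<otimes> x = v"
  have "x \<otimes> (inv x \<otimes> v \<otimes> x) = x \<otimes> v" using e by simp
  then show "x \<otimes> v = v \<otimes> x" using x v by (simp add: m_assoc)
next
  assume e: "x \<otimes> v = v \<otimes> x"
  have "inv x \<otimes> v \<otimes> x = inv x \<otimes> (x \<otimes> v)" using e x v by (simp add: m_assoc)
  then show "inv x \<otimes> v \<otimes> x = v" using x v by simp
qed

lemma comm_inv:
  assumes x: "x \<in> carrier G" and v: "v \<in> carrier G" and e: "x \<otimes> v = v \<otimes> x"
  shows "x \<otimes> inv v = inv v \<otimes> x"
proof -
  have "inv v \<otimes> (x \<otimes> v) \<otimes> inv v = inv v \<otimes> (v \<otimes> x) \<otimes> inv v" using e by simp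
  then show ?thesis using x v by (simp add: m_assoc)
qed

end

context pm begin

lemma HGgrp: "group (G\<lparr>carrier := H\<rparr>)" using subgroup_imp_group[OF Hs] .

lemma HGsolv: "solvable (G\<lparr>carrier := H\<rparr>)"
proof -
  have "group_hom (G\<lparr>carrier := H\<rparr>) G id"
    unfolding group_hom_def group_hom_axioms_def
  proof (intro conjI)
    show "group (G\<lparr>carrier := H\<rparr>)" by (rule HGgrp)
    show "group G" by (rule is_group)
    show "id \<in> hom (G\<lparr>carrier := H\<rparr>) G"
      by (rule homI) (use Hc in auto)
  qed
  then show ?thesis using group_hom.inj_hom_imp_solvable[of "G\<lparr>carrier := H\<rparr>" G id] solv by simp
qed

lemma finH: "finite H" using fin Hc finite_subset by blast
lemma finN: "finite N" using fin Nc finite_subset by blast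

lemma exists_L:
  assumes Hne: "H \<noteq> {\<one>}"
  shows "\<exists>L. L \<lhd> G\<lparr>carrier := H\<rparr> \<and> L \<noteq> {\<one>} \<and>
           (\<forall>K. K \<lhd> G\<lparr>carrier := H\<rparr> \<and> K \<subseteq> L \<longrightarrow> K = {\<one>} \<or> K = L)"
proof -
  define Pr where "Pr K \<longleftrightarrow> K \<lhd> G\<lparr>carrier := H\<rparr> \<and> K \<noteq> {\<one>}" for K
  have "Pr H" unfolding Pr_def using group.normal_self[OF HGgrp] Hne by simp
  then obtain L where L: "Pr L" and Lmin: "\<And>K. Pr K \<Longrightarrow> card L \<le> card K"
    using ex_has_least_nat[of Pr H card] by blast
  have LH: "L \<subseteq> H" using L unfolding Pr_def
    using subgroup.subset[OF normal_imp_subgroup] by fastforce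
  have finL: "finite L" using LH finH finite_subset by blast
  have "K = {\<one>} \<or> K = L" if K: "K \<lhd> G\<lparr>carrier := H\<rparr>" "K \<subseteq> L" for K
  proof (cases "K = {\<one>}")
    case False
    then have "Pr K" using K unfolding Pr_def by simp
    then have "card L \<le> card K" by (rule Lmin)
    moreover have "card K \<le> card L" using card_mono[OF finL K(2)] .
    ultimately have "card K = card L" by simp
    then have "K = L" using card_subset_eq[OF finL K(2)] by simp
    then show ?thesis by simp
  qed simp
  then show ?thesis using L unfolding Pr_def by blast
qed

end

context pm begin

lemma L_facts:
  assumes L: "L \<lhd> G\<lparr>carrier := H\<rparr>"
  shows "subgroup L G" "L \<subseteq> H"
    "\<And>a l. a \<in> H \<Longrightarrow> l \<in> L \<Longrightarrow> a \<otimes> l \<otimes> inv a \<in> L"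
    "\<And>a l. a \<in> H \<Longrightarrow> l \<in> L \<Longrightarrow> inv a \<otimes> l \<otimes> a \<in> L"
proof -
  have LsH: "subgroup L (G\<lparr>carrier := H\<rparr>)" using normal_imp_subgroup[OF L] .
  show Ls: "subgroup L G" using subgroup_trans[OF Hs LsH] .
  show LH: "L \<subseteq> H" using subgroup.subset[OF LsH] by simp
  show A: "a \<otimes> l \<otimes> inv a \<in> L" if "a \<in> H" "l \<in> L" for a l
  proof -
    have "a \<otimes>\<^bsub>G\<lparr>carrier := H\<rparr>\<^esub> l \<otimes>\<^bsub>G\<lparr>carrier := H\<rparr>\<^esub> inv\<^bsub>G\<lparr>carrier := H\<rparr>\<^esub> a \<in> L"
      using normal.inv_op_closed2[OF L] that by simp
    then show ?thesis using m_inv_consistent[OF Hs] that by simp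
  qed
  show "inv a \<otimes> l \<otimes> a \<in> L" if "a \<in> H" "l \<in> L" for a l
  proof -
    have "inv a \<in> H" using subgroup.m_inv_closed[OF Hs that(1)] .
    then have "inv a \<otimes> l \<otimes> inv (inv a) \<in> L" using A that(2) by blast
    then show ?thesis using that Hc by auto
  qed
qed

lemma not_same_prime:
  assumes L: "L \<lhd> G\<lparr>carrier := H\<rparr>" and Lne: "L \<noteq> {\<one>}"
    and cL: "card L = p ^ b" and p: "Factorial_Ring.prime p" and cN: "card N = p ^ a" and a: "a \<ge> 1"
  shows False
proof -
  have Ls: "subgroup L G" and LH: "L \<subseteq> H"
    and Lin1: "\<And>a l. a \<in> H \<Longrightarrow> l \<in> L \<Longrightarrow> a \<otimes> l \<otimes> inv a \<in> L"
    and Lin2: "\<And>a l. a \<in> H \<Longrightarrow> l \<in> L \<Longrightarrow> inv a \<otimes> l \<otimes> a \<in> L"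
    using L_facts[OF L] by auto
  have Lc: "L \<subseteq> carrier G" using LH Hc by auto
  have finL: "finite L" using LH finH finite_subset by blast
  define C where "C = {v \<in> N. \<forall>x\<in>L. x \<otimes> v = v \<otimes> x}"
  have fp: "card N mod p = card {e \<in> N. \<forall>x \<in> carrier (G\<lparr>carrier := L\<rparr>). inv x \<otimes> e \<otimes> x = e} mod p"
  proof (rule fixpoint_mod[where act = "\<lambda>e x. inv x \<otimes> e \<otimes> x"])
    show "group (G\<lparr>carrier := L\<rparr>)" using subgroup_imp_group[OF Ls] .
    show "finite (carrier (G\<lparr>carrier := L\<rparr>))" using finL by simp
    show "Factorial_Ring.prime p" by (rule p)
    show "card (carrier (G\<lparr>carrier := L\<rparr>)) = p ^ b" using cL by simp
    show "finite N" by (rule finN)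
    show "inv x \<otimes> e \<otimes> x \<in> N" if "e \<in> N" "x \<in> carrier (G\<lparr>carrier := L\<rparr>)" for e x
      using normal.inv_op_closed1[OF Nn _ that(1), of x] that(2) Lc by auto
    show "inv \<one>\<^bsub>G\<lparr>carrier := L\<rparr>\<^esub> \<otimes> e \<otimes> \<one>\<^bsub>G\<lparr>carrier := L\<rparr>\<^esub> = e" if "e \<in> N" for e
      using that Nc by auto
    show "inv y \<otimes> (inv x \<otimes> e \<otimes> x) \<otimes> y =
          inv (x \<otimes>\<^bsub>G\<lparr>carrier := L\<rparr>\<^esub> y) \<otimes> e \<otimes> (x \<otimes>\<^bsub>G\<lparr>carrier := L\<rparr>\<^esub> y)"
      if "e \<in> N" "x \<in> carrier (G\<lparr>carrier := L\<rparr>)" "y \<in> carrier (G\<lparr>carrier := L\<rparr>)" for e x y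
    proof -
      have c: "e \<in> carrier G" "x \<in> carrier G" "y \<in> carrier G" using that Nc Lc by auto
      then show ?thesis by (simp add: m_assoc inv_mult_group)
    qed
  qed
  have "{e \<in> N. \<forall>x \<in> carrier (G\<lparr>carrier := L\<rparr>). inv x \<otimes> e \<otimes> x = e} = C"
  proof -
    have "inv x \<otimes> e \<otimes> x = e \<longleftrightarrow> x \<otimes> e = e \<otimes> x" if "e \<in> N" "x \<in> L" for e x
      using comm_conj_iff[of x e] that Nc Lc by auto
    then show ?thesis unfolding C_def by auto
  qed
  moreover have "card N mod p = 0" using cN a by (simp add: power_eq_if)
  ultimately have pC: "p dvd card C" using fp by (simp add: dvd_eq_mod_eq_0)
  have CN: "C \<subseteq> N" by (auto simp: C_def)
  have finC: "finite C" using CN finN finite_subset by blast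
  have oneC: "\<one> \<in> C" unfolding C_def using subgroup.one_closed[OF Ns] Lc by auto
  have "card C \<noteq> 0" using finC oneC by auto
  then have "card C \<ge> p" using pC by (simp add: dvd_imp_le)
  moreover have "p \<ge> 2" using prime_ge_2_nat[OF p] .
  ultimately have "card C \<noteq> 1" by simp
  then have Cne: "C \<noteq> {\<one>}" by auto
  have Cs: "subgroup C G"
  proof (rule subgroupI)
    show "C \<subseteq> carrier G" using CN Nc by auto
    show "C \<noteq> {}" using oneC by auto
    show "inv v \<in> C" if v: "v \<in> C" for v
    proof -
      have vN: "v \<in> N" and vc: "v \<in> carrier G" using v CN Nc by auto
      have "x \<otimes> inv v = inv v \<otimes> x" if x: "x \<in> L" for x
        using comm_inv[of x v] x v Lc vc unfolding C_def by auto
      then show ?thesis unfolding C_def using subgroup.m_inv_closed[OF Ns vN] by auto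
    qed
    show "v \<otimes> w \<in> C" if v: "v \<in> C" and w: "w \<in> C" for v w
    proof -
      have vN: "v \<in> N" and vc: "v \<in> carrier G" using v CN Nc by auto
      have wN: "w \<in> N" and wc: "w \<in> carrier G" using w CN Nc by auto
      have "x \<otimes> (v \<otimes> w) = (v \<otimes> w) \<otimes> x" if x: "x \<in> L" for x
      proof -
        have xc: "x \<in> carrier G" using x Lc by auto
        have e1: "x \<otimes> v = v \<otimes> x" and e2: "x \<otimes> w = w \<otimes> x" using v w x unfolding C_def by auto
        have "x \<otimes> (v \<otimes> w) = (x \<otimes> v) \<otimes> w" using xc vc wc by (simp add: m_assoc)
        also have "\<dots> = v \<otimes> (x \<otimes> w)" using e1 xc vc wc by (simp add: m_assoc)
        also have "\<dots> = (v \<otimes> w) \<otimes> x" using e2 xc vc wc by (simp add: m_assoc)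
        finally show ?thesis .
      qed
      then show ?thesis unfolding C_def using subgroup.m_closed[OF Ns vN wN] by auto
    qed
  qed
  have Cn: "C \<lhd> G"
  proof (rule norm_by_parts[OF Cs Hc Nc decomp])
    show "a \<otimes> v \<otimes> inv a \<in> C" if a: "a \<in> H" and v: "v \<in> C" for a v
    proof -
      have ac: "a \<in> carrier G" using a Hc by auto
      have vN: "v \<in> N" and vc: "v \<in> carrier G" using v CN Nc by auto
      have "a \<otimes> v \<otimes> inv a \<in> N" using normal.inv_op_closed2[OF Nn ac vN] .
      moreover have "x \<otimes> (a \<otimes> v \<otimes> inv a) = (a \<otimes> v \<otimes> inv a) \<otimes> x" if x: "x \<in> L" for x
      proof -
        have xc: "x \<in> carrier G" using x Lc by auto
        define x' where "x' = inv a \<otimes> x \<otimes> a"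
        have x'L: "x' \<in> L" unfolding x'_def using Lin2[OF a x] .
        have x'c: "x' \<in> carrier G" using x'L Lc by auto
        have ex: "x = a \<otimes> x' \<otimes> inv a" unfolding x'_def using ac xc by (simp add: m_assoc)
        have cm: "x' \<otimes> v = v \<otimes> x'" using v x'L unfolding C_def by auto
        have "x \<otimes> (a \<otimes> v \<otimes> inv a) = a \<otimes> (x' \<otimes> v) \<otimes> inv a"
          using ex ac x'c vc by (simp add: m_assoc)
        also have "\<dots> = a \<otimes> (v \<otimes> x') \<otimes> inv a" using cm by simp
        also have "\<dots> = (a \<otimes> v \<otimes> inv a) \<otimes> x"
          using ex ac x'c vc by (simp add: m_assoc)
        finally show ?thesis .
      qed
      ultimately show ?thesis unfolding C_def by auto
    qed
    show "b \<otimes> v \<otimes> inv b \<in> C" if b: "b \<in> N" and v: "v \<in> C" for b v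
    proof -
      have vN: "v \<in> N" and vc: "v \<in> carrier G" using v CN Nc by auto
      have bc: "b \<in> carrier G" using b Nc by auto
      have "b \<otimes> v = v \<otimes> b" using Nab[OF b vN] .
      then have "b \<otimes> v \<otimes> inv b = v" using bc vc by (simp add: m_assoc)
      then show ?thesis using v by simp
    qed
  qed
  have "C = N" using Nmin[OF Cn CN] Cne by simp
  have "L \<lhd> G"
  proof (rule norm_by_parts[OF Ls Hc Nc decomp])
    show "a \<otimes> l \<otimes> inv a \<in> L" if "a \<in> H" "l \<in> L" for a l using Lin1[OF that] .
    show "b \<otimes> l \<otimes> inv b \<in> L" if b: "b \<in> N" and l: "l \<in> L" for b l
    proof -
      have "b \<in> C" using b \<open>C = N\<close> by simp
      then have "b \<otimes> l = l \<otimes> b" using l unfolding C_def by auto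
      moreover have "b \<in> carrier G" "l \<in> carrier G" using b l Nc Lc by auto
      ultimately have "b \<otimes> l \<otimes> inv b = l" by (simp add: m_assoc)
      then show ?thesis using l by simp
    qed
  qed
  then have "L = {\<one>}" using normal_in_H_triv LH by blast
  then show False using Lne by simp
qed

lemma complement_conj:
  assumes W: "subgroup W G" and XN: "W \<inter> N \<subseteq> {\<one>}"
    and dec: "\<And>g. g \<in> carrier G \<Longrightarrow> \<exists>x\<in>W. \<exists>v\<in>N. g = x \<otimes> v" and Hne: "H \<noteq> {\<one>}"
  shows "\<exists>v\<in>N. W = (\<lambda>a. inv v \<otimes> a \<otimes> v) ` H"
proof -
  obtain L where L: "L \<lhd> G\<lparr>carrier := H\<rparr>" and Lne: "L \<noteq> {\<one>}"
    and Lmin: "\<forall>K. K \<lhd> G\<lparr>carrier := H\<rparr> \<and> K \<subseteq> L \<longrightarrow> K = {\<one>} \<or> K = L"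
    using exists_L[OF Hne] by blast
  have Ls: "subgroup L G" and LH: "L \<subseteq> H"
    and Lin1: "\<And>a l. a \<in> H \<Longrightarrow> l \<in> L \<Longrightarrow> a \<otimes> l \<otimes> inv a \<in> L"
    and Lin2: "\<And>a l. a \<in> H \<Longrightarrow> l \<in> L \<Longrightarrow> inv a \<otimes> l \<otimes> a \<in> L"
    using L_facts[OF L] by auto
  have Lc: "L \<subseteq> carrier G" using LH Hc by auto
  have finL: "finite L" using LH finH finite_subset by blast
  have Wc: "W \<subseteq> carrier G" using subgroup.subset[OF W] .
  have finW: "finite W" using Wc fin finite_subset by blast
  obtain q b where q: "Factorial_Ring.prime q" and b: "b \<ge> 1" and cL: "card L = q ^ b"
  proof -
    have "\<exists>q k. Factorial_Ring.prime q \<and> k \<ge> 1 \<and> card L = q ^ k"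
    proof (rule group.minnormal_pgroup[OF HGgrp])
      show "finite (carrier (G\<lparr>carrier := H\<rparr>))" using finH by simp
      show "solvable (G\<lparr>carrier := H\<rparr>)" by (rule HGsolv)
      show "L \<lhd> G\<lparr>carrier := H\<rparr>" by (rule L)
      show "\<forall>K. K \<lhd> G\<lparr>carrier := H\<rparr> \<and> K \<subseteq> L \<longrightarrow> K = {\<one>\<^bsub>G\<lparr>carrier := H\<rparr>\<^esub>} \<or> K = L"
        using Lmin by simp
      show "L \<noteq> {\<one>\<^bsub>G\<lparr>carrier := H\<rparr>\<^esub>}" using Lne by simp
    qed
    then show ?thesis using that by blast
  qed
  obtain p a where p: "Factorial_Ring.prime p" and a: "a \<ge> 1" and cN: "card N = p ^ a"
    using minnormal_pgroup[OF fin solv Nn _ Nne] Nmin by blast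
  have qp: "q \<noteq> p"
  proof
    assume "q = p"
    then have "card L = p ^ b" using cL by simp
    then show False using not_same_prime[OF L Lne _ p cN a] by blast
  qed
  have qN: "\<not> q dvd card N"
  proof
    assume "q dvd card N"
    then have "q dvd p" using cN prime_dvd_power[OF q] by simp
    then have "q = p" using primes_dvd_imp_eq[OF q p] by simp
    then show False using qp by simp
  qed
  define K where "K = L <#> N"
  have Ks: "subgroup K G" unfolding K_def using prod_subgroup[OF Nn Ls] .
  have Kc: "K \<subseteq> carrier G" using subgroup.subset[OF Ks] .
  have NK: "N \<subseteq> K"
  proof
    fix v assume v: "v \<in> N"
    have "v = \<one> \<otimes> v" using v Nc by auto
    then show "v \<in> K" unfolding K_def set_mult_mem using v subgroup.one_closed[OF Ls] by blast
  qed
  have LK: "L \<subseteq> K"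
  proof
    fix l assume l: "l \<in> L"
    have "l = l \<otimes> \<one>" using l Lc by auto
    then show "l \<in> K" unfolding K_def set_mult_mem using l subgroup.one_closed[OF Ns] by blast
  qed
  have Kn: "K \<lhd> G"
  proof (rule norm_by_parts[OF Ks Hc Nc decomp])
    show "c \<otimes> s \<otimes> inv c \<in> K" if c: "c \<in> H" and s: "s \<in> K" for c s
    proof -
      obtain l u where lu: "l \<in> L" "u \<in> N" "s = l \<otimes> u" using s unfolding K_def set_mult_mem by blast
      have cc: "c \<in> carrier G" using c Hc by auto
      have lc: "l \<in> carrier G" and uc: "u \<in> carrier G" using lu Lc Nc by auto
      have "c \<otimes> s \<otimes> inv c = (c \<otimes> l \<otimes> inv c) \<otimes> (c \<otimes> u \<otimes> inv c)"
        using lu(3) cc lc uc by (simp add: m_assoc)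
      moreover have "c \<otimes> l \<otimes> inv c \<in> L" using Lin1[OF c lu(1)] .
      moreover have "c \<otimes> u \<otimes> inv c \<in> N" using normal.inv_op_closed2[OF Nn cc lu(2)] .
      ultimately show ?thesis unfolding K_def set_mult_mem by blast
    qed
    show "w \<otimes> s \<otimes> inv w \<in> K" if w: "w \<in> N" and s: "s \<in> K" for w s
    proof -
      obtain l u where lu: "l \<in> L" "u \<in> N" "s = l \<otimes> u" using s unfolding K_def set_mult_mem by blast
      have wc: "w \<in> carrier G" using w Nc by auto
      have lc: "l \<in> carrier G" and uc: "u \<in> carrier G" using lu Lc Nc by auto
      have "w \<otimes> s \<otimes> inv w = l \<otimes> ((inv l \<otimes> w \<otimes> l) \<otimes> u \<otimes> inv w)"
        using lu(3) wc lc uc by (simp add: m_assoc)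
      moreover have "inv l \<otimes> w \<otimes> l \<in> N" using normal.inv_op_closed1[OF Nn lc w] .
      then have "(inv l \<otimes> w \<otimes> l) \<otimes> u \<otimes> inv w \<in> N"
        using subgroup.m_closed[OF Ns] subgroup.m_inv_closed[OF Ns] lu(2) w by simp
      ultimately show ?thesis unfolding K_def set_mult_mem using lu(1) by blast
    qed
  qed
  have LN1: "L \<inter> N \<subseteq> {\<one>}"
  proof
    fix x assume x: "x \<in> L \<inter> N"
    then have "x \<in> H" "x \<in> N" using LH by auto
    then show "x \<in> {\<one>}" using HN_triv[of x] by simp
  qed
  have cK: "card K = card L * card N" unfolding K_def using card_prod[OF Ls Ns LN1] .
  define P where "P = W \<inter> K"
  have Ps: "subgroup P G" unfolding P_def using subgroups_Inter_pair[OF W Ks] .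
  have PK: "P \<subseteq> K" and PW: "P \<subseteq> W" unfolding P_def by auto
  have PNK: "P <#> N = K"
  proof
    show "P <#> N \<subseteq> K"
    proof
      fix y assume "y \<in> P <#> N"
      then obtain x v where xv: "x \<in> P" "v \<in> N" "y = x \<otimes> v" unfolding set_mult_mem by blast
      have "x \<in> K" "v \<in> K" using xv PK NK by auto
      then show "y \<in> K" using subgroup.m_closed[OF Ks] xv(3) by simp
    qed
    show "K \<subseteq> P <#> N"
    proof
      fix y assume y: "y \<in> K"
      then have "y \<in> carrier G" using Kc by auto
      then obtain x v where xv: "x \<in> W" "v \<in> N" "y = x \<otimes> v" using dec by blast
      have xc: "x \<in> carrier G" and vc: "v \<in> carrier G" using xv Wc Nc by auto
      have "x = y \<otimes> inv v" using xv xc vc by (simp add: m_assoc)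
      moreover have "inv v \<in> K" using NK subgroup.m_inv_closed[OF Ns xv(2)] by auto
      ultimately have "x \<in> K" using y subgroup.m_closed[OF Ks] by simp
      then have "x \<in> P" using xv(1) unfolding P_def by simp
      then show "y \<in> P <#> N" unfolding set_mult_mem using xv by blast
    qed
  qed
  have PN1: "P \<inter> N \<subseteq> {\<one>}" using XN PW by blast
  have N0: "card N \<noteq> 0" using finN subgroup.one_closed[OF Ns] by auto
  have "card K = card P * card N" using card_prod[OF Ps Ns PN1] PNK by simp
  then have cP: "card P = q ^ b" using cK cL N0 by simp
  have "card (carrier G) = card W * card N"
  proof -
    have "W <#> N = carrier G"
    proof
      show "W <#> N \<subseteq> carrier G" using subgroup.subset[OF prod_subgroup[OF Nn W]] .
      show "carrier G \<subseteq> W <#> N"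
      proof
        fix g assume "g \<in> carrier G"
        then show "g \<in> W <#> N" using dec[of g] unfolding set_mult_mem by simp
      qed
    qed
    then show ?thesis using card_prod[OF W Ns XN] by simp
  qed
  moreover have "card (carrier G) = card H * card N"
  proof -
    have "H \<inter> N \<subseteq> {\<one>}"
    proof
      fix x assume "x \<in> H \<inter> N"
      then show "x \<in> {\<one>}" using HN_triv[of x] by simp
    qed
    then show ?thesis using card_prod[OF Hs Ns] HN by simp
  qed
  ultimately have cW: "card W = card H" using N0 by simp
  have rc_mem: "z \<in> L #> g \<longleftrightarrow> (\<exists>l\<in>L. z = l \<otimes> g)" for z g
    unfolding r_coset_def by auto
  have Pc: "P \<subseteq> carrier G" using subgroup.subset[OF Ps] .
  have finP: "finite P" using Pc fin finite_subset by blast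
  define E where "E = (\<lambda>v. L #> v) ` N"
  have finE: "finite E" unfolding E_def using finN by simp
  have injE: "inj_on (\<lambda>v. L #> v) N"
  proof (rule inj_onI)
    fix v w assume v: "v \<in> N" and w: "w \<in> N" and e: "L #> v = L #> w"
    have vc: "v \<in> carrier G" and wc: "w \<in> carrier G" using v w Nc by auto
    have "v \<in> L #> v" unfolding rc_mem using subgroup.one_closed[OF Ls] vc by force
    then have "v \<in> L #> w" using e by simp
    then obtain l where l: "l \<in> L" "v = l \<otimes> w" unfolding rc_mem by blast
    have lc: "l \<in> carrier G" using l Lc by auto
    have "l = v \<otimes> inv w" using l lc wc by (simp add: m_assoc)
    then have "l \<in> N" using subgroup.m_closed[OF Ns] subgroup.m_inv_closed[OF Ns] v w by simp
    then have "l = \<one>" using HN_triv[of l] l LH by auto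
    then show "v = w" using l wc by simp
  qed
  have cE: "card E = card N" unfolding E_def using card_image[OF injE] .
  have fp: "card E mod q = card {S \<in> E. \<forall>x \<in> carrier (G\<lparr>carrier := P\<rparr>). S #> x = S} mod q"
  proof (rule fixpoint_mod[where act = "\<lambda>S x. S #> x"])
    show "group (G\<lparr>carrier := P\<rparr>)" using subgroup_imp_group[OF Ps] .
    show "finite (carrier (G\<lparr>carrier := P\<rparr>))" using finP by simp
    show "Factorial_Ring.prime q" by (rule q)
    show "card (carrier (G\<lparr>carrier := P\<rparr>)) = q ^ b" using cP by simp
    show "finite E" by (rule finE)
    show "S #> x \<in> E" if S: "S \<in> E" and x: "x \<in> carrier (G\<lparr>carrier := P\<rparr>)" for S x
    proof -
      obtain v where v: "v \<in> N" "S = L #> v" using S unfolding E_def by blast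
      have vc: "v \<in> carrier G" using v Nc by auto
      have xP: "x \<in> P" using x by simp
      have xc: "x \<in> carrier G" using xP Pc by auto
      have "v \<otimes> x \<in> K" using subgroup.m_closed[OF Ks] NK PK v(1) xP by blast
      then obtain l w where lw: "l \<in> L" "w \<in> N" "v \<otimes> x = l \<otimes> w" unfolding K_def set_mult_mem by blast
      have lc: "l \<in> carrier G" and wc: "w \<in> carrier G" using lw Lc Nc by auto
      have "S #> x = L #> (v \<otimes> x)" using v(2) coset_mult_assoc[OF Lc vc xc] by simp
      also have "\<dots> = (L #> l) #> w" using lw(3) coset_mult_assoc[OF Lc lc wc] by simp
      also have "\<dots> = L #> w" using subgroup.rcos_const[OF Ls is_group lw(1)] by simp
      finally show ?thesis unfolding E_def using lw(2) by blast
    qed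
    show "S #> \<one>\<^bsub>G\<lparr>carrier := P\<rparr>\<^esub> = S" if S: "S \<in> E" for S
    proof -
      obtain v where v: "v \<in> N" "S = L #> v" using S unfolding E_def by blast
      have "S \<subseteq> carrier G" using v r_coset_subset_G[OF Lc] Nc by auto
      then show ?thesis by simp
    qed
    show "(S #> x) #> y = S #> (x \<otimes>\<^bsub>G\<lparr>carrier := P\<rparr>\<^esub> y)"
      if S: "S \<in> E" and x: "x \<in> carrier (G\<lparr>carrier := P\<rparr>)" and y: "y \<in> carrier (G\<lparr>carrier := P\<rparr>)" for S x y
    proof -
      obtain v where v: "v \<in> N" "S = L #> v" using S unfolding E_def by blast
      have "S \<subseteq> carrier G" using v r_coset_subset_G[OF Lc] Nc by auto
      moreover have "x \<in> carrier G" "y \<in> carrier G" using x y Pc by auto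
      ultimately show ?thesis using coset_mult_assoc by simp
    qed
  qed
  have "card E mod q \<noteq> 0" using cE qN by (simp add: dvd_eq_mod_eq_0)
  then have "card {S \<in> E. \<forall>x \<in> carrier (G\<lparr>carrier := P\<rparr>). S #> x = S} mod q \<noteq> 0" using fp by simp
  then have "{S \<in> E. \<forall>x \<in> carrier (G\<lparr>carrier := P\<rparr>). S #> x = S} \<noteq> {}" by (metis card.empty mod_0)
  then obtain v0 where v0: "v0 \<in> N" and fix0: "\<And>x. x \<in> P \<Longrightarrow> (L #> v0) #> x = L #> v0"
    unfolding E_def by auto
  have v0c: "v0 \<in> carrier G" using v0 Nc by auto
  define c where "c y = v0 \<otimes> y \<otimes> inv v0" for y
  have cmP: "c y \<in> L" if y: "y \<in> P" for y
  proof -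
    have yc: "y \<in> carrier G" using y Pc by auto
    have "v0 \<otimes> y \<in> L #> (v0 \<otimes> y)" unfolding rc_mem using subgroup.one_closed[OF Ls] v0c yc by force
    also have "L #> (v0 \<otimes> y) = (L #> v0) #> y" using coset_mult_assoc[OF Lc v0c yc] by simp
    also have "\<dots> = L #> v0" using fix0[OF y] .
    finally obtain l where l: "l \<in> L" "v0 \<otimes> y = l \<otimes> v0" unfolding rc_mem by blast
    have lc: "l \<in> carrier G" using l Lc by auto
    have "c y = l" unfolding c_def using l(2) lc v0c yc by (simp add: m_assoc)
    then show ?thesis using l by simp
  qed
  have cinv: "inv v0 \<otimes> c y \<otimes> v0 = y" if "y \<in> carrier G" for y
    unfolding c_def using that v0c by (simp add: m_assoc)
  have injc: "inj_on c P"
  proof (rule inj_onI)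
    fix y y' assume "y \<in> P" "y' \<in> P" "c y = c y'"
    then show "y = y'" using cinv Pc by (metis subsetD)
  qed
  have cPL: "c ` P = L"
  proof (rule card_subset_eq[OF finL])
    show "c ` P \<subseteq> L" using cmP by blast
    show "card (c ` P) = card L" using card_image[OF injc] cP cL by simp
  qed
  define Nm where "Nm = {g \<in> carrier G. \<forall>l\<in>L. g \<otimes> l \<otimes> inv g \<in> L \<and> inv g \<otimes> l \<otimes> g \<in> L}"
  have Nms: "subgroup Nm G"
  proof (rule subgroupI)
    show "Nm \<subseteq> carrier G" unfolding Nm_def by blast
    have "\<one> \<in> Nm" unfolding Nm_def using Lc by auto
    then show "Nm \<noteq> {}" by blast
    show "inv g \<in> Nm" if g: "g \<in> Nm" for g
    proof -
      have gc: "g \<in> carrier G" using g unfolding Nm_def by blast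
      show ?thesis using g gc unfolding Nm_def by auto
    qed
    show "g \<otimes> h \<in> Nm" if g: "g \<in> Nm" and h: "h \<in> Nm" for g h
    proof -
      have gc: "g \<in> carrier G" using g unfolding Nm_def by blast
      have hc: "h \<in> carrier G" using h unfolding Nm_def by blast
      have "(g \<otimes> h) \<otimes> l \<otimes> inv (g \<otimes> h) \<in> L \<and> inv (g \<otimes> h) \<otimes> l \<otimes> (g \<otimes> h) \<in> L" if l: "l \<in> L" for l
      proof -
        have lc: "l \<in> carrier G" using l Lc by auto
        have h1: "h \<otimes> l \<otimes> inv h \<in> L" "inv h \<otimes> l \<otimes> h \<in> L" using h l unfolding Nm_def by auto
        have g1: "g \<otimes> l \<otimes> inv g \<in> L" "inv g \<otimes> l \<otimes> g \<in> L" using g l unfolding Nm_def by auto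
        have "g \<otimes> (h \<otimes> l \<otimes> inv h) \<otimes> inv g \<in> L" using g h1(1) unfolding Nm_def by auto
        moreover have "(g \<otimes> h) \<otimes> l \<otimes> inv (g \<otimes> h) = g \<otimes> (h \<otimes> l \<otimes> inv h) \<otimes> inv g"
          using gc hc lc by (simp add: m_assoc inv_mult_group)
        moreover have "inv h \<otimes> (inv g \<otimes> l \<otimes> g) \<otimes> h \<in> L" using h g1(2) unfolding Nm_def by auto
        moreover have "inv (g \<otimes> h) \<otimes> l \<otimes> (g \<otimes> h) = inv h \<otimes> (inv g \<otimes> l \<otimes> g) \<otimes> h"
          using gc hc lc by (simp add: m_assoc inv_mult_group)
        ultimately show ?thesis by simp
      qed
      then show ?thesis unfolding Nm_def using gc hc by auto
    qed
  qed
  have HNm: "H \<subseteq> Nm" unfolding Nm_def using Hc Lin1 Lin2 by blast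
  have "Nm \<noteq> carrier G"
  proof
    assume eq: "Nm = carrier G"
    have "L \<lhd> G"
    proof (rule normal_invI[OF Ls])
      fix g l assume "g \<in> carrier G" "l \<in> L"
      then show "g \<otimes> l \<otimes> inv g \<in> L" using eq unfolding Nm_def by blast
    qed
    then have "L = {\<one>}" using normal_in_H_triv LH by blast
    then show False using Lne by simp
  qed
  then have NmH: "Nm = H" using Hmax[OF Nms HNm] by simp
  have cWin: "c x \<in> H" if x: "x \<in> W" for x
  proof -
    have xc: "x \<in> carrier G" using x Wc by auto
    have gc: "c x \<in> carrier G" unfolding c_def using xc v0c by simp
    have "c x \<otimes> l \<otimes> inv (c x) \<in> L \<and> inv (c x) \<otimes> l \<otimes> c x \<in> L" if l: "l \<in> L" for l
    proof -
      obtain y where y: "y \<in> P" "l = c y" using l cPL by blast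
      have yc: "y \<in> carrier G" using y Pc by auto
      have yW: "y \<in> W" and yK: "y \<in> K" using y unfolding P_def by auto
      have "x \<otimes> y \<otimes> inv x \<in> W"
        using subgroup.m_closed[OF W] subgroup.m_inv_closed[OF W] x yW by simp
      moreover have "x \<otimes> y \<otimes> inv x \<in> K" using normal.inv_op_closed2[OF Kn xc yK] .
      ultimately have p1: "x \<otimes> y \<otimes> inv x \<in> P" unfolding P_def by simp
      have "inv x \<otimes> y \<otimes> x \<in> W"
        using subgroup.m_closed[OF W] subgroup.m_inv_closed[OF W] x yW by simp
      moreover have "inv x \<otimes> y \<otimes> x \<in> K" using normal.inv_op_closed1[OF Kn xc yK] .
      ultimately have p2: "inv x \<otimes> y \<otimes> x \<in> P" unfolding P_def by simp
      have "c x \<otimes> l \<otimes> inv (c x) = c (x \<otimes> y \<otimes> inv x)"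
        unfolding y(2) c_def using xc yc v0c by (simp add: m_assoc inv_mult_group)
      moreover have "inv (c x) \<otimes> l \<otimes> c x = c (inv x \<otimes> y \<otimes> x)"
        unfolding y(2) c_def using xc yc v0c by (simp add: m_assoc inv_mult_group)
      ultimately show ?thesis using cmP p1 p2 by simp
    qed
    then have "c x \<in> Nm" unfolding Nm_def using gc by blast
    then show ?thesis using NmH by simp
  qed
  have injcW: "inj_on c W"
  proof (rule inj_onI)
    fix y y' assume "y \<in> W" "y' \<in> W" "c y = c y'"
    then show "y = y'" using cinv Wc by (metis subsetD)
  qed
  have cWH: "c ` W = H"
  proof (rule card_subset_eq[OF finH])
    show "c ` W \<subseteq> H" using cWin by blast
    show "card (c ` W) = card H" using card_image[OF injcW] cW by simp
  qed
  have "W = (\<lambda>a. inv v0 \<otimes> a \<otimes> v0) ` H"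
  proof
    show "W \<subseteq> (\<lambda>a. inv v0 \<otimes> a \<otimes> v0) ` H"
    proof
      fix x assume x: "x \<in> W"
      then have "x = inv v0 \<otimes> c x \<otimes> v0" using cinv Wc by auto
      then show "x \<in> (\<lambda>a. inv v0 \<otimes> a \<otimes> v0) ` H" using cWin[OF x] by blast
    qed
    show "(\<lambda>a. inv v0 \<otimes> a \<otimes> v0) ` H \<subseteq> W"
    proof
      fix z assume "z \<in> (\<lambda>a. inv v0 \<otimes> a \<otimes> v0) ` H"
      then obtain a where a: "a \<in> H" "z = inv v0 \<otimes> a \<otimes> v0" by blast
      then obtain x where x: "x \<in> W" "a = c x" using cWH by blast
      have "z = x" using a(2) x cinv Wc by auto
      then show "z \<in> W" using x by simp
    qed
  qed
  then show ?thesis using v0 by blast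
qed

end

context pm begin

lemma dir1:
  assumes h: "h \<in> H" and n: "n \<in> N" and y: "y \<in> carrier G"
    and gen: "generate G {h \<otimes> n, y} = carrier G"
  shows "\<exists>k\<in>H. generate G {h, k} = H"
proof -
  obtain k m where k: "k \<in> H" "m \<in> N" "y = k \<otimes> m" using decomp[OF y] by blast
  define L where "L = generate G {h, k}"
  have hc: "h \<in> carrier G" using h Hc by auto
  have kc: "k \<in> carrier G" using k Hc by auto
  have nc: "n \<in> carrier G" using n Nc by auto
  have mc: "m \<in> carrier G" using k Nc by auto
  have Ls: "subgroup L G" unfolding L_def by (rule generate_is_subgroup) (use hc kc in auto)
  have LH: "L \<subseteq> H" unfolding L_def by (rule generate_subgroup_incl) (use h k Hs in auto)
  have LNs: "subgroup (L <#> N) G" by (rule prod_subgroup[OF Nn Ls])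
  have hL: "h \<in> L" unfolding L_def by (rule generate.incl) simp
  have kL: "k \<in> L" unfolding L_def by (rule generate.incl) simp
  have "h \<otimes> n \<in> L <#> N" unfolding set_mult_mem using hL n by blast
  moreover have "y \<in> L <#> N" unfolding set_mult_mem using kL k by blast
  ultimately have "generate G {h \<otimes> n, y} \<subseteq> L <#> N"
    by (intro generate_subgroup_incl[OF _ LNs]) auto
  then have all: "carrier G \<subseteq> L <#> N" using gen by simp
  have "H \<subseteq> L"
  proof
    fix x assume x: "x \<in> H"
    then have "x \<in> carrier G" using Hc by auto
    then obtain l v where lv: "l \<in> L" "v \<in> N" "x = l \<otimes> v" using all set_mult_mem by blast
    have lc: "l \<in> carrier G" and vc: "v \<in> carrier G" using lv LH Hc Nc by auto
    have "v = inv l \<otimes> x" using lv lc vc by (simp add: m_assoc[symmetric])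
    moreover have "inv l \<otimes> x \<in> H"
      using subgroup.m_closed[OF Hs] subgroup.m_inv_closed[OF Hs] lv LH x by blast
    ultimately have "v = \<one>" using HN_triv lv(2) by simp
    then show "x \<in> L" using lv lc by simp
  qed
  then show ?thesis using LH k(1) unfolding L_def by blast
qed

lemma dir2:
  assumes h: "h \<in> H" "h \<noteq> \<one>" and n: "n \<in> N" and k: "k \<in> H" and gen: "generate G {h, k} = H"
  shows "\<exists>y\<in>carrier G. generate G {h \<otimes> n, y} = carrier G"
proof (rule ccontr)
  assume na: "\<not> ?thesis"
  define W where "W m = generate G {h \<otimes> n, k \<otimes> m}" for m
  have hc: "h \<in> carrier G" using h Hc by auto
  have kc: "k \<in> carrier G" using k Hc by auto
  have nc: "n \<in> carrier G" using n Nc by auto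
  have Xs: "subgroup (W m) G" if m: "m \<in> N" for m
  proof -
    have "m \<in> carrier G" using m Nc by auto
    then show ?thesis unfolding W_def by (intro generate_is_subgroup) (use hc nc kc in auto)
  qed
  have hnX: "h \<otimes> n \<in> W m" for m unfolding W_def by (rule generate.incl) simp
  have kmX: "k \<otimes> m \<in> W m" for m unfolding W_def by (rule generate.incl) simp
  have Xne: "W m \<noteq> carrier G" if m: "m \<in> N" for m
  proof
    assume "W m = carrier G"
    moreover have "k \<otimes> m \<in> carrier G" using m Nc kc by auto
    ultimately show False using na unfolding W_def by blast
  qed
  have XNall: "W m <#> N = carrier G" if m: "m \<in> N" for m
  proof
    have mc: "m \<in> carrier G" using m Nc by auto
    have s: "subgroup (W m <#> N) G" using prod_subgroup[OF Nn Xs[OF m]] .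
    show "W m <#> N \<subseteq> carrier G" using subgroup.subset[OF s] .
    have NXN: "N \<subseteq> W m <#> N"
    proof
      fix v assume v: "v \<in> N"
      have "v = \<one> \<otimes> v" using v Nc by auto
      then show "v \<in> W m <#> N" unfolding set_mult_mem using v subgroup.one_closed[OF Xs[OF m]] by blast
    qed
    have "h = (h \<otimes> n) \<otimes> inv n" using hc nc by (simp add: m_assoc)
    moreover have "inv n \<in> N" using subgroup.m_inv_closed[OF Ns n] .
    ultimately have "h \<in> W m <#> N" unfolding set_mult_mem using hnX by blast
    moreover have "k = (k \<otimes> m) \<otimes> inv m" using kc mc by (simp add: m_assoc)
    moreover have "inv m \<in> N" using subgroup.m_inv_closed[OF Ns m] .
    ultimately have "k \<in> W m <#> N" "h \<in> W m <#> N" unfolding set_mult_mem using kmX by blast+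
    then have "generate G {h, k} \<subseteq> W m <#> N" by (intro generate_subgroup_incl[OF _ s]) auto
    then have HXN: "H \<subseteq> W m <#> N" using gen by simp
    show "carrier G \<subseteq> W m <#> N"
    proof
      fix g assume "g \<in> carrier G"
      then obtain a v where "a \<in> H" "v \<in> N" "g = a \<otimes> v" using decomp by blast
      then show "g \<in> W m <#> N" using HXN NXN subgroup.m_closed[OF s] by blast
    qed
  qed
  have XN1: "W m \<inter> N \<subseteq> {\<one>}" if m: "m \<in> N" for m
  proof -
    have Xc: "W m \<subseteq> carrier G" using subgroup.subset[OF Xs[OF m]] .
    have s: "subgroup (W m \<inter> N) G" using subgroups_Inter_pair[OF Xs[OF m] Ns] .
    have Xdec: "\<exists>x\<in>W m. \<exists>v\<in>N. g = x \<otimes> v" if "g \<in> carrier G" for g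
      using XNall[OF m] that set_mult_mem by blast
    have "W m \<inter> N \<lhd> G"
    proof (rule norm_by_parts[OF s Xc Nc Xdec])
      show "a \<otimes> s \<otimes> inv a \<in> W m \<inter> N" if a: "a \<in> W m" and s: "s \<in> W m \<inter> N" for a s
      proof -
        have ac: "a \<in> carrier G" using a Xc by auto
        have "a \<otimes> s \<otimes> inv a \<in> N" using normal.inv_op_closed2[OF Nn ac] s by simp
        moreover have "a \<otimes> s \<otimes> inv a \<in> W m"
          using subgroup.m_closed[OF Xs[OF m]] subgroup.m_inv_closed[OF Xs[OF m]] a s by simp
        ultimately show ?thesis by simp
      qed
      show "b \<otimes> s \<otimes> inv b \<in> W m \<inter> N" if b: "b \<in> N" and s: "s \<in> W m \<inter> N" for b s
      proof -
        have "b \<otimes> s = s \<otimes> b" using Nab b s by blast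
        moreover have "b \<in> carrier G" "s \<in> carrier G" using b s Nc by auto
        ultimately have "b \<otimes> s \<otimes> inv b = s" by (simp add: m_assoc)
        then show ?thesis using s by simp
      qed
    qed
    then have "W m \<inter> N = {\<one>} \<or> W m \<inter> N = N" using Nmin by blast
    moreover have "W m \<inter> N \<noteq> N"
    proof
      assume "W m \<inter> N = N"
      then have NX: "N \<subseteq> W m" by blast
      have "carrier G \<subseteq> W m"
      proof
        fix g assume "g \<in> carrier G"
        then obtain x v where "x \<in> W m" "v \<in> N" "g = x \<otimes> v" using Xdec by blast
        then show "g \<in> W m" using NX subgroup.m_closed[OF Xs[OF m]] by blast
      qed
      then show False using Xne[OF m] Xc by blast
    qed
    ultimately show ?thesis by blast
  qed
  have Hne: "H \<noteq> {\<one>}" using h by blast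
  define cj where "cj v = (\<lambda>a. inv v \<otimes> a \<otimes> v) ` H" for v
  have conj: "\<exists>v\<in>N. W m = cj v" if m: "m \<in> N" for m
    unfolding cj_def
  proof (rule complement_conj[OF Xs[OF m] XN1[OF m] _ Hne])
    show "\<exists>x\<in>W m. \<exists>v\<in>N. g = x \<otimes> v" if "g \<in> carrier G" for g
      using XNall[OF m] that set_mult_mem by blast
  qed
  have inj: "inj_on W N"
  proof (rule inj_onI)
    fix m m' assume m: "m \<in> N" and m': "m' \<in> N" and e: "W m = W m'"
    have mc: "m \<in> carrier G" and mc': "m' \<in> carrier G" using m m' Nc by auto
    have "k \<otimes> m \<in> W m'" using kmX e by metis
    then have "inv (k \<otimes> m) \<otimes> (k \<otimes> m') \<in> W m'"
      using kmX subgroup.m_closed[OF Xs[OF m']] subgroup.m_inv_closed[OF Xs[OF m']] by blast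
    moreover have "inv (k \<otimes> m) \<otimes> (k \<otimes> m') = inv m \<otimes> m'"
      using kc mc mc' by (simp add: inv_mult_group m_assoc)
    moreover have "inv m \<otimes> m' \<in> N"
      using subgroup.m_closed[OF Ns] subgroup.m_inv_closed[OF Ns] m m' by blast
    ultimately have "inv m \<otimes> m' = \<one>" using XN1[OF m'] by auto
    then show "m = m'" using mc mc' by (metis inv_closed inv_inv l_inv_ex inv_equality)
  qed
  have finN: "finite N" using fin Nc finite_subset by blast
  have sub: "W ` N \<subseteq> cj ` N" using conj by blast
  have "card (W ` N) = card N" using card_image[OF inj] .
  moreover have "card (cj ` N) \<le> card N" using card_image_le[OF finN] .
  moreover have "finite (cj ` N)" using finN by simp
  ultimately have eqs: "W ` N = cj ` N" using sub
    by (metis card_mono card_subset_eq le_antisym)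
  have hn_cj: "h \<otimes> n \<in> cj v" if v: "v \<in> N" for v
  proof -
    have "cj v \<in> W ` N" using eqs v by blast
    then obtain m where "m \<in> N" "cj v = W m" by blast
    then show ?thesis using hnX by simp
  qed
  have "h \<otimes> n \<in> core H G" unfolding mem_core
  proof
    fix g assume g: "g \<in> carrier G"
    then have "inv g \<in> carrier G" by simp
    then obtain a0 v where av: "a0 \<in> H" "v \<in> N" "inv g = a0 \<otimes> v" using decomp by blast
    have a0c: "a0 \<in> carrier G" and vc: "v \<in> carrier G" using av Hc Nc by auto
    obtain b where b: "b \<in> H" "h \<otimes> n = inv v \<otimes> b \<otimes> v" using hn_cj[OF av(2)] unfolding cj_def by blast
    have bc: "b \<in> carrier G" using b Hc by auto
    have ge: "g = inv v \<otimes> inv a0" using av g a0c vc by (metis inv_inv inv_mult_group)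
    have "a0 \<otimes> b \<otimes> inv a0 \<in> H"
      using subgroup.m_closed[OF Hs] subgroup.m_inv_closed[OF Hs] av b by simp
    moreover have "h \<otimes> n = g \<otimes> (a0 \<otimes> b \<otimes> inv a0) \<otimes> inv g"
      using b(2) ge a0c vc bc by (simp add: m_assoc inv_mult_group)
    ultimately show "\<exists>a\<in>H. h \<otimes> n = g \<otimes> a \<otimes> inv g" by blast
  qed
  then have "h \<otimes> n = \<one>" using Hcf by simp
  then have "h = inv n" using hc nc by (metis inv_equality)
  then have "h \<in> N" using subgroup.m_inv_closed[OF Ns n] by simp
  then show False using HN_triv h by blast
qed

end

theorem proposition2p2:
  fixes G (structure)
  assumes "group G" and "finite (carrier G)"
    and "primitive_monolithic G" and "solvable G"
    and "N = socle G"
    and "maximal_subgroup H G" and "core_free H G"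
    and "h \<in> H" and "h \<noteq> \<one>" and "n \<in> N"
  shows "h \<otimes> n \<in> gen_elems G \<longleftrightarrow> h \<in> gen_elems (G\<lparr>carrier := H\<rparr>)"
proof -
  interpret group G by (rule assms(1))
  have ex1: "\<exists>!N. minimal_normal N G" using assms(3) unfolding primitive_monolithic_def by simp
  obtain N0 where N0: "minimal_normal N0 G" and uniq: "\<And>K. minimal_normal K G \<Longrightarrow> K = N0"
    using ex1 by metis
  have "{K. minimal_normal K G} = {N0}" using N0 uniq by blast
  then have "socle G = generate G N0" unfolding socle_def by simp
  moreover have N0n: "N0 \<lhd> G" using N0 unfolding minimal_normal_def by blast
  then have N0s: "subgroup N0 G" by (rule normal_imp_subgroup)
  have "generate G N0 = N0"
  proof
    show "generate G N0 \<subseteq> N0" using generate_subgroup_incl[OF subset_refl N0s] .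
    show "N0 \<subseteq> generate G N0"
    proof
      fix x assume "x \<in> N0" then show "x \<in> generate G N0" by (rule generate.incl)
    qed
  qed
  ultimately have NN0: "N = N0" using assms(5) by simp
  have pmG: "pm G N H"
  proof (rule pm.intro[OF assms(1)], rule pm_axioms.intro)
    show "finite (carrier G)" by (rule assms(2))
    show "solvable G" by (rule assms(4))
    show "N \<lhd> G" using N0n NN0 by simp
    show "N \<noteq> {\<one>}" using N0 NN0 unfolding minimal_normal_def by blast
    show "K = {\<one>} \<or> K = N" if "K \<lhd> G" "K \<subseteq> N" for K
      using N0 NN0 that unfolding minimal_normal_def by blast
    show "subgroup H G" using assms(6) unfolding maximal_subgroup_def by blast
    show "K = H \<or> K = carrier G" if "subgroup K G" "H \<subseteq> K" for K
      using assms(6) that unfolding maximal_subgroup_def by blast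
    show "core H G = {\<one>}" using assms(7) unfolding core_free_def by simp
  qed
  interpret P: pm G N H by (rule pmG)
  have hc: "h \<in> carrier G" using assms(8) P.Hc by auto
  have nc: "n \<in> carrier G" using assms(10) P.Nc by auto
  have genH: "generate (G\<lparr>carrier := H\<rparr>) {h, k} = generate G {h, k}" if "k \<in> H" for k
    using generate_consistent[of "{h, k}" H] assms(8) that P.Hs by simp
  show ?thesis
  proof
    assume "h \<otimes> n \<in> gen_elems G"
    then obtain y where y: "y \<in> carrier G" "generate G {h \<otimes> n, y} = carrier G"
      unfolding gen_elems_def by blast
    obtain k where k: "k \<in> H" "generate G {h, k} = H" using P.dir1[OF assms(8) assms(10) y] by blast
    then show "h \<in> gen_elems (G\<lparr>carrier := H\<rparr>)"
      unfolding gen_elems_def using assms(8) genH[OF k(1)] by auto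
  next
    assume "h \<in> gen_elems (G\<lparr>carrier := H\<rparr>)"
    then obtain k where k: "k \<in> H" "generate (G\<lparr>carrier := H\<rparr>) {h, k} = H"
      unfolding gen_elems_def by auto
    then have "generate G {h, k} = H" using genH by simp
    then obtain y where "y \<in> carrier G" "generate G {h \<otimes> n, y} = carrier G"
      using P.dir2[OF assms(8) assms(9) assms(10) k(1)] by blast
    then show "h \<otimes> n \<in> gen_elems G" unfolding gen_elems_def using hc nc by auto
  qed
qed

end
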